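(* Let $A(x)=\begin{pmatrix}a_{11}(x)&a_{12}(x)\\ a_{21}(x)&a_{22}(x)\end{pmatrix}$ be a $2\times2$ matrix function holomorphic in a punctured disc around $x_0$ with convergent expansions $a_{11}(x)=\alpha_0+\alpha_1(x-x_0)+\dots$, $a_{22}(x)=\beta_0+\beta_1(x-x_0)+\dots$, $a_{12}(x)=\gamma_{-2}(x-x_0)^{-2}+\gamma_{-1}(x-x_0)^{-1}+\dots$, $a_{21}(x)=\mu_2(x-x_0)^2+\mu_3(x-x_0)^3+\dots$ (complex coefficients). Then $x_0$ is a strong regular point of the system $\frac{dW}{dx}=A(x)W$ if and only if $$\gamma_{-2}(\alpha_0-\beta_0)=\gamma_{-1}.$$
   Context: For a system $\frac{dW}{dx}=A(x)W$ with $A$ holomorphic and single-valued in a punctured disc around $x_0$, every fundamental (invertible matrix) solution has the form $W(x)=S(x)(x-x_0)^{\Phi}$ with $S$ holomorphic and single-valued in the punctured disc and $\Phi$ a constant matrix. The point $x_0$ is called strong regular for the system if a fundamental solution $W$ is single-valued in the punctured disc and has at most a pole at $x_0$, i.e. $W(x)=\sum_{k\ge m}b_k(x-x_0)^k$ for some $m\in\mathbb Z$. *)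

theory Defs
  imports "HOL-Analysis.Analysis"
begin

definition solves_on :: "(complex \<Rightarrow> complex^'n^'n) \<Rightarrow> (complex \<Rightarrow> complex^'n^'n) \<Rightarrow> complex set \<Rightarrow> bool" where
  "solves_on A W S \<longleftrightarrow>
     (\<forall>x\<in>S. \<forall>i j. ((\<lambda>y. W y $ i $ j) has_field_derivative ((A x ** W x) $ i $ j)) (at x))"

text \<open>Strong regular point: some fundamental (pointwise invertible) solution,
  defined (hence single-valued) on a punctured disc around x0, is given there by
  a Laurent series with finitely many negative powers,
  W(x) = sum_{k >= m} b_k (x - x0)^k (entrywise).\<close>
definition strong_regular_point :: "(complex \<Rightarrow> complex^'n^'n) \<Rightarrow> complex \<Rightarrow> bool" where
  "strong_regular_point A x0 \<longleftrightarrow>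
     (\<exists>r>0. \<exists>W :: complex \<Rightarrow> complex^'n^'n. \<exists>m::int.
        solves_on A W (ball x0 r - {x0}) \<and>
        (\<forall>x\<in>ball x0 r - {x0}. det (W x) \<noteq> 0) \<and>
        (\<forall>i j. \<exists>b :: nat \<Rightarrow> complex. \<forall>x\<in>ball x0 r - {x0}.
           (\<lambda>n. b n * (x - x0) powi (int n + m)) sums (W x $ i $ j)))"

end

theory Submission
  imports Defs "HOL-Complex_Analysis.Complex_Analysis"
begin

notation fls_nth (infixl \<open>$$\<close> 75)

definition ordge :: "int \<Rightarrow> complex fls \<Rightarrow> bool" where
  "ordge k F \<longleftrightarrow> (\<forall>n<k. F $$ n = 0)"

lemma ordgeD: "ordge k F \<Longrightarrow> n < k \<Longrightarrow> F $$ n = 0"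
  by (simp add: ordge_def)

lemma ordge_add: "ordge k F \<Longrightarrow> ordge k G \<Longrightarrow> ordge k (F + G)"
  by (simp add: ordge_def)
lemma ordge_diff: "ordge k F \<Longrightarrow> ordge k G \<Longrightarrow> ordge k (F - G)"
  by (simp add: ordge_def)
lemma ordge_uminus: "ordge k F \<Longrightarrow> ordge k (- F)"
  by (simp add: ordge_def)
lemma ordge_mono: "ordge k F \<Longrightarrow> j \<le> k \<Longrightarrow> ordge j F"
  by (simp add: ordge_def)
lemma ordge_zero[simp]: "ordge k 0"
  by (simp add: ordge_def)
lemma ordge_const: "ordge 0 (fls_const c)"
  by (simp add: ordge_def)
lemma ordge_fps: "ordge 0 (fps_to_fls F)"
  by (simp add: ordge_def)
lemma ordge_Xinv: "ordge (-1) fls_X_inv"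
  by (simp add: ordge_def)
lemma ordge_subdeg: "ordge (fls_subdegree F) F"
  by (simp add: ordge_def)
lemma ordge_imp_subdeg: "ordge k F \<Longrightarrow> F \<noteq> 0 \<Longrightarrow> k \<le> fls_subdegree F"
  by (rule fls_subdegree_geI) (auto simp: ordge_def)

lemma ordge_mult: "ordge a F \<Longrightarrow> ordge b G \<Longrightarrow> ordge (a + b) (F * G)"
proof (cases "F = 0 \<or> G = 0")
  case True then show ?thesis by auto
next
  case False
  assume "ordge a F" "ordge b G"
  then have "a \<le> fls_subdegree F" "b \<le> fls_subdegree G" using False ordge_imp_subdeg by auto
  then show ?thesis unfolding ordge_def by (auto intro!: fls_times_nth_eq0)
qed

lemma ordge_mult0: "ordge 0 F \<Longrightarrow> ordge b G \<Longrightarrow> ordge b (F * G)"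
  using ordge_mult[of 0 F b G] by simp

lemma ordge_Xinv_mult: "ordge b G \<Longrightarrow> ordge (b - 1) (fls_X_inv * G)"
  using ordge_mult[OF ordge_Xinv, of b G] by simp

lemma Xinv_mult_nth: "(fls_X_inv * (G::complex fls)) $$ n = G $$ (n + 1)"
  by (subst fls_X_inv_times_conv_shift(1)) simp

lemma deriv_at_subdeg:
  fixes F :: "complex fls"
  assumes "F \<noteq> 0" "fls_subdegree F \<noteq> 0"
  shows "fls_deriv F $$ (fls_subdegree F - 1) \<noteq> 0"
  using assms by (simp del: of_int_eq_0_iff add: of_int_eq_0_iff[where 'a=complex])

lemma column_orders:
  fixes P Q H11 K A21 H22 :: "complex fls" and e :: complex
  assumes E1: "fls_deriv P = H11 * P + K * Q"
    and E2: "fls_deriv Q = A21 * P + H22 * Q"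
    and o1: "ordge 0 H11" and o2: "ordge 0 (K - fls_const e * fls_X_inv)"
    and o3: "ordge 0 A21" and o4: "ordge 0 H22" and e: "e \<noteq> 0"
  shows "ordge 0 P \<and> ordge 1 Q"
proof -
  define K0 where "K0 = K - fls_const e * fls_X_inv"
  have KK: "K = K0 + fls_const e * fls_X_inv" by (simp add: K0_def)
  have E1': "fls_deriv P = H11 * P + K0 * Q + fls_const e * (fls_X_inv * Q)"
    using E1 by (simp add: KK algebra_simps)
  have oK0: "ordge 0 K0" using o2 by (simp add: K0_def)
  show ?thesis
  proof (cases "Q = 0")
    case True
    have "ordge 0 P"
    proof (cases "P = 0 \<or> fls_subdegree P = 0")
      case True then show ?thesis by (auto simp: ordge_def)
    next
      case False
      let ?a = "fls_subdegree P"
      have "fls_deriv P $$ (?a - 1) \<noteq> 0" using False deriv_at_subdeg by blast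
      moreover have "(H11 * P) $$ (?a - 1) = 0" using ordge_mult0[OF o1 ordge_subdeg[of P]] by (auto simp: ordge_def)
      ultimately show ?thesis using E1 \<open>Q = 0\<close> by simp
    qed
    then show ?thesis using True by simp
  next
    case Qnz: False
    let ?b = "fls_subdegree Q"
    show ?thesis
    proof (cases "?b = 0")
      case False
      have L: "fls_deriv Q $$ (?b - 1) \<noteq> 0" using False Qnz deriv_at_subdeg by blast
      have "(H22 * Q) $$ (?b - 1) = 0" using ordge_mult0[OF o4 ordge_subdeg[of Q]] by (auto simp: ordge_def)
      then have R: "(A21 * P) $$ (?b - 1) \<noteq> 0" using L E2 by simp
      then have Pnz: "P \<noteq> 0" by auto
      let ?a = "fls_subdegree P"
      have "\<not> ?b \<le> ?a"
      proof
        assume "?b \<le> ?a"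
        then have "ordge ?b (A21 * P)" using ordge_mult0[OF o3 ordge_subdeg, of P] ordge_mono by blast
        then show False using R by (auto simp: ordge_def)
      qed
      then have ab: "?a < ?b" by simp
      have "?a = 0"
      proof (rule ccontr)
        assume a0: "?a \<noteq> 0"
        have "fls_deriv P $$ (?a - 1) \<noteq> 0" using a0 Pnz deriv_at_subdeg by blast
        moreover have "(H11 * P) $$ (?a - 1) = 0" using ordge_mult0[OF o1 ordge_subdeg[of P]] by (auto simp: ordge_def)
        moreover have "(K0 * Q) $$ (?a - 1) = 0"
          using ordge_mult0[OF oK0 ordge_subdeg, of Q] ab by (auto simp: ordge_def)
        moreover have "(fls_X_inv * Q) $$ (?a - 1) = 0"
          using ab by (simp add: Xinv_mult_nth)
        ultimately show False using E1' by simp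
      qed
      then show ?thesis using ab ordge_subdeg[of P] ordge_subdeg[of Q] by (auto intro: ordge_mono)
    next
      case b0: True
      have oP: "ordge 0 P"
      proof (cases "P = 0 \<or> fls_subdegree P \<ge> 0")
        case True then show ?thesis using ordge_subdeg[of P] by (auto intro: ordge_mono)
      next
        case False
        let ?a = "fls_subdegree P"
        have Pnz: "P \<noteq> 0" and aneg: "?a < 0" using False by auto
        have "fls_deriv P $$ (?a - 1) \<noteq> 0" using aneg Pnz deriv_at_subdeg by force
        moreover have "(H11 * P) $$ (?a - 1) = 0" using ordge_mult0[OF o1 ordge_subdeg[of P]] by (auto simp: ordge_def)
        moreover have "(K0 * Q) $$ (?a - 1) = 0"
          using ordge_mult0[OF oK0 ordge_subdeg, of Q] aneg b0 by (auto simp: ordge_def)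
        moreover have "(fls_X_inv * Q) $$ (?a - 1) = 0"
          using aneg b0 by (simp add: Xinv_mult_nth)
        ultimately show ?thesis using E1' by simp
      qed
      have "fls_deriv P $$ (-1) = 0" by simp
      moreover have "(H11 * P) $$ (-1) = 0" using ordge_mult0[OF o1 oP] by (auto simp: ordge_def)
      moreover have "(K0 * Q) $$ (-1) = 0"
        using ordge_mult0[OF oK0 ordge_subdeg, of Q] b0 by (auto simp: ordge_def)
      moreover have "(fls_X_inv * Q) $$ (-1) \<noteq> 0"
        using b0 Qnz nth_fls_subdegree_nonzero[of Q] by (simp add: Xinv_mult_nth)
      ultimately have False using E1' e by (simp add: fls_const_nth)
      then show ?thesis ..
    qed
  qed
qed

lemma fls_const_diff': "fls_const (x - y) = fls_const x - (fls_const y :: complex fls)"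
  by (simp add: fls_eq_iff)

lemma B_ordge:
  fixes A11 A12 A21 A22 :: "complex fls" and a0 b0 c g1 :: complex
  assumes h11: "ordge 1 (A11 - fls_const a0)" and h22: "ordge 1 (A22 - fls_const b0)"
    and h21: "ordge 2 A21"
    and h12: "ordge 0 (A12 - fls_const c * fls_X_inv^2 - fls_const g1 * fls_X_inv)"
  shows "ordge 0 (A11 + fls_const c * fls_X_inv * A21)"
    and "ordge 0 (A22 - fls_const c * fls_X_inv * A21)"
    and "ordge 0 A21"
    and "ordge 0 (A12 - fls_const c * fls_X_inv^2 - fls_const c * fls_X_inv * (A11 - A22)
             - fls_const c * fls_const c * fls_X_inv^2 * A21
             - fls_const (g1 - c * (a0 - b0)) * fls_X_inv)"
proof -
  have o11: "ordge 0 A11"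
  proof -
    have "A11 = (A11 - fls_const a0) + fls_const a0" by simp
    moreover have "ordge 0 (A11 - fls_const a0)" using h11 by (rule ordge_mono) simp
    ultimately show ?thesis using ordge_add[OF _ ordge_const] by metis
  qed
  have o22: "ordge 0 A22"
  proof -
    have "A22 = (A22 - fls_const b0) + fls_const b0" by simp
    moreover have "ordge 0 (A22 - fls_const b0)" using h22 by (rule ordge_mono) simp
    ultimately show ?thesis using ordge_add[OF _ ordge_const] by metis
  qed
  have x21: "ordge 1 (fls_X_inv * A21)" using ordge_Xinv_mult[OF h21] by simp
  have cx21: "ordge 0 (fls_const c * fls_X_inv * A21)"
    using ordge_mult0[OF ordge_const ordge_mono[OF x21]] by (simp add: mult.assoc)
  show "ordge 0 (A11 + fls_const c * fls_X_inv * A21)" by (rule ordge_add[OF o11 cx21])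
  show "ordge 0 (A22 - fls_const c * fls_X_inv * A21)" by (rule ordge_diff[OF o22 cx21])
  show "ordge 0 A21" using h21 by (rule ordge_mono) simp
  have eq: "A12 - fls_const c * fls_X_inv^2 - fls_const c * fls_X_inv * (A11 - A22)
             - fls_const c * fls_const c * fls_X_inv^2 * A21
             - fls_const (g1 - c * (a0 - b0)) * fls_X_inv
        = (A12 - fls_const c * fls_X_inv^2 - fls_const g1 * fls_X_inv)
          - fls_const c * (fls_X_inv * ((A11 - fls_const a0) - (A22 - fls_const b0)))
          - (fls_const c * fls_const c) * (fls_X_inv * (fls_X_inv * A21))"
  proof -
    have ceq: "fls_const (g1 - c * (a0 - b0)) = fls_const g1 - fls_const c * (fls_const a0 - fls_const b0)"
      by (simp add: fls_eq_iff)
    show ?thesis unfolding ceq power2_eq_square by algebra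
  qed
  have t2: "ordge 0 (fls_X_inv * ((A11 - fls_const a0) - (A22 - fls_const b0)))"
    using ordge_Xinv_mult[OF ordge_diff[OF h11 h22]] by simp
  have t3: "ordge 0 (fls_X_inv * (fls_X_inv * A21))"
    using ordge_Xinv_mult[OF x21] by simp
  have cc: "ordge 0 (fls_const c * fls_const c)"
    using ordge_mult0[OF ordge_const ordge_const] by simp
  show "ordge 0 (A12 - fls_const c * fls_X_inv^2 - fls_const c * fls_X_inv * (A11 - A22)
             - fls_const c * fls_const c * fls_X_inv^2 * A21
             - fls_const (g1 - c * (a0 - b0)) * fls_X_inv)"
    unfolding eq
    by (intro ordge_diff h12 ordge_mult0[OF ordge_const t2] ordge_mult0[OF cc t3])
qed

lemma column_transform:
  fixes A11 A12 A21 A22 U V :: "complex fls" and c :: complex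
  assumes EU: "fls_deriv U = A11 * U + A12 * V" and EV: "fls_deriv V = A21 * U + A22 * V"
  shows "fls_deriv (U + fls_const c * fls_X_inv * V)
           = (A11 + fls_const c * fls_X_inv * A21) * (U + fls_const c * fls_X_inv * V)
             + (A12 - fls_const c * fls_X_inv^2 - fls_const c * fls_X_inv * (A11 - A22)
             - fls_const c * fls_const c * fls_X_inv^2 * A21) * V"
    and "fls_deriv V = A21 * (U + fls_const c * fls_X_inv * V) + (A22 - fls_const c * fls_X_inv * A21) * V"
proof -
  show "fls_deriv (U + fls_const c * fls_X_inv * V)
           = (A11 + fls_const c * fls_X_inv * A21) * (U + fls_const c * fls_X_inv * V)
             + (A12 - fls_const c * fls_X_inv^2 - fls_const c * fls_X_inv * (A11 - A22)
             - fls_const c * fls_const c * fls_X_inv^2 * A21) * V"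
    by (simp add: EU EV power2_eq_square algebra_simps)
  show "fls_deriv V = A21 * (U + fls_const c * fls_X_inv * V) + (A22 - fls_const c * fls_X_inv * A21) * V"
    by (simp add: EV algebra_simps)
qed

lemma fls_main:
  fixes A11 A12 A21 A22 U1 V1 U2 V2 :: "complex fls" and a0 b0 c g1 :: complex
  assumes h11: "ordge 1 (A11 - fls_const a0)" and h22: "ordge 1 (A22 - fls_const b0)"
    and h21: "ordge 2 A21"
    and h12: "ordge 0 (A12 - fls_const c * fls_X_inv^2 - fls_const g1 * fls_X_inv)"
    and EU1: "fls_deriv U1 = A11 * U1 + A12 * V1" and EV1: "fls_deriv V1 = A21 * U1 + A22 * V1"
    and EU2: "fls_deriv U2 = A11 * U2 + A12 * V2" and EV2: "fls_deriv V2 = A21 * U2 + A22 * V2"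
    and cond: "c * (a0 - b0) \<noteq> g1"
  shows "U1 * V2 - U2 * V1 = 0"
proof -
  define e where "e = g1 - c * (a0 - b0)"
  have e: "e \<noteq> 0" using cond by (simp add: e_def)
  note B = B_ordge[OF h11 h22 h21 h12]
  define P1 where "P1 = U1 + fls_const c * fls_X_inv * V1"
  define P2 where "P2 = U2 + fls_const c * fls_X_inv * V2"
  have c1: "ordge 0 P1 \<and> ordge 1 V1"
    unfolding P1_def
    by (rule column_orders[OF column_transform[OF EU1 EV1] B(1) _ B(3) B(2) e])
       (use B(4) in \<open>simp add: e_def\<close>)
  have c2: "ordge 0 P2 \<and> ordge 1 V2"
    unfolding P2_def
    by (rule column_orders[OF column_transform[OF EU2 EV2] B(1) _ B(3) B(2) e])
       (use B(4) in \<open>simp add: e_def\<close>)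
  define D where "D = U1 * V2 - U2 * V1"
  have "D = P1 * V2 - P2 * V1" by (simp add: D_def P1_def P2_def algebra_simps)
  then have oD: "ordge 1 D"
    using ordge_diff[OF ordge_mult[of 0 P1 1 V2] ordge_mult[of 0 P2 1 V1]] c1 c2 by simp
  have dD: "fls_deriv D = (A11 + A22) * D"
    by (simp add: D_def EU1 EV1 EU2 EV2 algebra_simps)
  have o1122: "ordge 0 (A11 + A22)"
  proof -
    have "A11 + A22 = (A11 - fls_const a0) + (A22 - fls_const b0) + fls_const (a0 + b0)"
      by (simp add: fls_plus_const[symmetric])
    moreover have "ordge 0 (A11 - fls_const a0)" using h11 by (rule ordge_mono) simp
    moreover have "ordge 0 (A22 - fls_const b0)" using h22 by (rule ordge_mono) simp
    ultimately show ?thesis using ordge_add[OF ordge_add ordge_const] by metis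
  qed
  show ?thesis
  proof (rule ccontr)
    assume nz: "U1 * V2 - U2 * V1 \<noteq> 0"
    then have Dnz: "D \<noteq> 0" by (simp add: D_def)
    have s1: "1 \<le> fls_subdegree D" using ordge_imp_subdeg[OF oD Dnz] .
    then have "fls_deriv D $$ (fls_subdegree D - 1) \<noteq> 0" using deriv_at_subdeg[OF Dnz] by simp
    moreover have "((A11 + A22) * D) $$ (fls_subdegree D - 1) = 0"
      using ordge_mult0[OF o1122 ordge_subdeg[of D]] by (auto simp: ordge_def)
    ultimately show False using dD by simp
  qed
qed

definition prim :: "real \<Rightarrow> (complex \<Rightarrow> complex) \<Rightarrow> complex \<Rightarrow> complex" where
  "prim \<delta> h = (SOME F. F 0 = 0 \<and> (\<forall>z\<in>ball 0 \<delta>. (F has_field_derivative h z) (at z)))"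

lemma prim:
  assumes "h holomorphic_on ball 0 \<delta>"
  shows "prim \<delta> h 0 = 0" "\<And>z. z \<in> ball 0 \<delta> \<Longrightarrow> (prim \<delta> h has_field_derivative h z) (at z)"
proof -
  obtain g where g: "\<And>x. x \<in> ball 0 \<delta> \<Longrightarrow> (g has_field_derivative h x) (at x within ball 0 \<delta>)"
    using holomorphic_convex_primitive'[OF convex_ball open_ball assms] by blast
  have gd: "((\<lambda>z. g z - g 0) has_field_derivative h z) (at z)" if z: "z \<in> ball (0::complex) \<delta>" for z
  proof -
    have "(g has_field_derivative h z) (at z)"
      using g[OF z] at_within_open[OF z open_ball] by simp
    then show ?thesis by (auto intro!: derivative_eq_intros)
  qed
  have "\<exists>F. F 0 = 0 \<and> (\<forall>z\<in>ball 0 \<delta>. (F has_field_derivative h z) (at z))"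
    using gd by (intro exI[of _ "\<lambda>z. g z - g 0"]) auto
  then have S: "prim \<delta> h 0 = 0 \<and> (\<forall>z\<in>ball 0 \<delta>. (prim \<delta> h has_field_derivative h z) (at z))"
    unfolding prim_def by (rule someI_ex)
  then show "prim \<delta> h 0 = 0" by blast
  show "\<And>z. z \<in> ball 0 \<delta> \<Longrightarrow> (prim \<delta> h has_field_derivative h z) (at z)" using S by blast
qed

primrec pic :: "real \<Rightarrow> (complex \<Rightarrow> complex) \<Rightarrow> (complex \<Rightarrow> complex) \<Rightarrow> (complex \<Rightarrow> complex)
   \<Rightarrow> (complex \<Rightarrow> complex) \<Rightarrow> complex \<Rightarrow> complex \<Rightarrow> nat \<Rightarrow> (complex \<Rightarrow> complex) \<times> (complex \<Rightarrow> complex)" where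
  "pic \<delta> b11 b12 b21 b22 u0 v0 0 = (\<lambda>_. u0, \<lambda>_. v0)"
| "pic \<delta> b11 b12 b21 b22 u0 v0 (Suc k) =
     (prim \<delta> (\<lambda>z. b11 z * fst (pic \<delta> b11 b12 b21 b22 u0 v0 k) z + b12 z * snd (pic \<delta> b11 b12 b21 b22 u0 v0 k) z),
      prim \<delta> (\<lambda>z. b21 z * fst (pic \<delta> b11 b12 b21 b22 u0 v0 k) z + b22 z * snd (pic \<delta> b11 b12 b21 b22 u0 v0 k) z))"

lemma series_deriv:
  fixes f :: "nat \<Rightarrow> complex \<Rightarrow> complex"
  assumes "\<And>k z. z \<in> ball 0 \<delta> \<Longrightarrow> (f k has_field_derivative f' k z) (at z)"
    and "\<And>k z. z \<in> ball 0 \<delta> \<Longrightarrow> norm (f k z) \<le> K * (1/2)^k"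
    and "\<And>z. z \<in> ball 0 \<delta> \<Longrightarrow> (\<lambda>n. \<Sum>k<n. f' k z) \<longlonglongrightarrow> L z"
    and "z \<in> ball 0 \<delta>"
  shows "((\<lambda>z. \<Sum>k. f k z) has_field_derivative L z) (at z)"
proof -
  have sm: "summable (\<lambda>k. K * (1/2::real)^k)"
    by (intro summable_mult summable_geometric) simp
  have ul: "uniform_limit (ball 0 \<delta>) (\<lambda>n x. \<Sum>k<n. f k x) (\<lambda>x. \<Sum>k. f k x) sequentially"
    by (rule Weierstrass_m_test[OF assms(2) sm])
  have "\<exists>g'. \<forall>x \<in> ball 0 \<delta>. ((\<lambda>x. \<Sum>k. f k x) has_field_derivative g' x) (at x) \<and>
          ((\<lambda>n. \<Sum>k<n. f' k x) \<longlonglongrightarrow> g' x)"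
  proof (rule has_complex_derivative_uniform_sequence[OF open_ball])
    fix n x assume "x \<in> ball (0::complex) \<delta>"
    then show "((\<lambda>x. \<Sum>k<n. f k x) has_field_derivative (\<Sum>k<n. f' k x)) (at x)"
      by (auto intro!: DERIV_sum assms(1))
  next
    fix x assume x: "x \<in> ball (0::complex) \<delta>"
    then obtain d where d: "d > 0" "cball x d \<subseteq> ball 0 \<delta>"
      using open_ball[of 0 \<delta>] by (meson open_contains_cball)
    then show "\<exists>d>0. cball x d \<subseteq> ball 0 \<delta> \<and>
        uniform_limit (cball x d) (\<lambda>n x. \<Sum>k<n. f k x) (\<lambda>x. \<Sum>k. f k x) sequentially"
      using uniform_limit_on_subset[OF ul d(2)] by blast
  qed
  then obtain g' where g': "\<And>x. x \<in> ball 0 \<delta> \<Longrightarrow> ((\<lambda>x. \<Sum>k. f k x) has_field_derivative g' x) (at x)"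
     "\<And>x. x \<in> ball 0 \<delta> \<Longrightarrow> ((\<lambda>n. \<Sum>k<n. f' k x) \<longlonglongrightarrow> g' x)" by blast
  have "g' z = L z" using LIMSEQ_unique[OF g'(2)[OF assms(4)] assms(3)[OF assms(4)]] .
  then show ?thesis using g'(1)[OF assms(4)] by simp
qed

lemma ode_local:
  fixes b11 b12 b21 b22 :: "complex \<Rightarrow> complex" and u0 v0 :: complex
  assumes \<rho>: "\<rho> > 0"
    and h11: "b11 holomorphic_on ball 0 \<rho>" and h12: "b12 holomorphic_on ball 0 \<rho>"
    and h21: "b21 holomorphic_on ball 0 \<rho>" and h22: "b22 holomorphic_on ball 0 \<rho>"
  shows "\<exists>\<delta>>0. \<exists>u v. u 0 = u0 \<and> v 0 = v0 \<and> (\<forall>z\<in>ball 0 \<delta>.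
            (u has_field_derivative (b11 z * u z + b12 z * v z)) (at z) \<and>
            (v has_field_derivative (b21 z * u z + b22 z * v z)) (at z))"
proof -
  define R where "R = \<rho> / 2"
  have R: "R > 0" "cball 0 R \<subseteq> ball (0::complex) \<rho>" using \<rho> by (auto simp: R_def)
  have bnd: "\<exists>M>0. \<forall>z\<in>cball 0 R. norm (b z) \<le> M" if "b holomorphic_on ball 0 \<rho>" for b
  proof -
    have "continuous_on (cball 0 R) b"
      using holomorphic_on_imp_continuous_on[OF holomorphic_on_subset[OF that R(2)]] .
    then have "compact (b ` cball 0 R)" by (intro compact_continuous_image) auto
    then have "bounded (b ` cball 0 R)" by (rule compact_imp_bounded)
    then show ?thesis by (auto simp: bounded_pos)
  qed
  obtain M11 where M11: "M11 > 0" "\<forall>z\<in>cball 0 R. norm (b11 z) \<le> M11" using bnd[OF h11] by blast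
  obtain M12 where M12: "M12 > 0" "\<forall>z\<in>cball 0 R. norm (b12 z) \<le> M12" using bnd[OF h12] by blast
  obtain M21 where M21: "M21 > 0" "\<forall>z\<in>cball 0 R. norm (b21 z) \<le> M21" using bnd[OF h21] by blast
  obtain M22 where M22: "M22 > 0" "\<forall>z\<in>cball 0 R. norm (b22 z) \<le> M22" using bnd[OF h22] by blast
  define M where "M = M11 + M12 + M21 + M22"
  have M: "M > 0" using M11 M12 M21 M22 by (simp add: M_def)
  define \<delta> where "\<delta> = min R (1 / (4 * M))"
  have \<delta>: "\<delta> > 0" using R M by (simp add: \<delta>_def)
  have sub: "ball 0 \<delta> \<subseteq> cball (0::complex) R" by (auto simp: \<delta>_def)
  have sub': "ball 0 \<delta> \<subseteq> ball (0::complex) \<rho>" using sub R(2) by blast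
  have Mb: "norm (b z) \<le> M" if "z \<in> ball 0 \<delta>" "b \<in> {b11, b12, b21, b22}" for b z
  proof -
    have zc: "z \<in> cball 0 R" using that(1) sub by auto
    have "norm (b11 z) \<le> M11" "norm (b12 z) \<le> M12" "norm (b21 z) \<le> M21" "norm (b22 z) \<le> M22"
      using zc M11 M12 M21 M22 by auto
    then show ?thesis using that(2) M11 M12 M21 M22 unfolding M_def by auto
  qed
  have hb: "b holomorphic_on ball 0 \<delta>" if "b \<in> {b11, b12, b21, b22}" for b
    using that holomorphic_on_subset[OF _ sub'] h11 h12 h21 h22 by auto
  define K where "K = norm u0 + norm v0"
  define u where "u k = fst (pic \<delta> b11 b12 b21 b22 u0 v0 k)" for k
  define v where "v k = snd (pic \<delta> b11 b12 b21 b22 u0 v0 k)" for k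
  have u0: "u 0 = (\<lambda>_. u0)" and v0: "v 0 = (\<lambda>_. v0)" by (simp_all add: u_def v_def)
  have uS: "u (Suc k) = prim \<delta> (\<lambda>z. b11 z * u k z + b12 z * v k z)" for k by (simp add: u_def v_def)
  have vS: "v (Suc k) = prim \<delta> (\<lambda>z. b21 z * u k z + b22 z * v k z)" for k by (simp add: u_def v_def)
  have step: "prim \<delta> (\<lambda>z. b z * u k z + c z * v k z) 0 = 0 \<and>
      (\<forall>z\<in>ball 0 \<delta>. (prim \<delta> (\<lambda>z. b z * u k z + c z * v k z) has_field_derivative (b z * u k z + c z * v k z)) (at z)) \<and>
      (\<forall>z\<in>ball 0 \<delta>. norm (prim \<delta> (\<lambda>z. b z * u k z + c z * v k z) z) \<le> K * (1/2)^Suc k)"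
    if IH: "u k holomorphic_on ball 0 \<delta>" "v k holomorphic_on ball 0 \<delta>"
       "\<forall>z\<in>ball 0 \<delta>. norm (u k z) \<le> K * (1/2)^k \<and> norm (v k z) \<le> K * (1/2)^k"
       and bc: "b \<in> {b11, b12, b21, b22}" "c \<in> {b11, b12, b21, b22}" for b c k
  proof -
    let ?h = "\<lambda>z. b z * u k z + c z * v k z"
    have hh: "?h holomorphic_on ball 0 \<delta>"
      using IH hb[OF bc(1)] hb[OF bc(2)] by (auto intro!: holomorphic_intros)
    note P = prim[OF hh]
    have hb2: "norm (?h z) \<le> 2 * M * (K * (1/2)^k)" if z: "z \<in> ball 0 \<delta>" for z
    proof -
      have "norm (?h z) \<le> norm (b z) * norm (u k z) + norm (c z) * norm (v k z)"
        by (metis norm_mult norm_triangle_ineq)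
      also have "\<dots> \<le> M * (K * (1/2)^k) + M * (K * (1/2)^k)"
        using Mb[OF z bc(1)] Mb[OF z bc(2)] IH(3) z M
        by (intro add_mono mult_mono) auto
      finally show ?thesis by (simp add: algebra_simps)
    qed
    have "norm (prim \<delta> ?h z) \<le> K * (1/2)^Suc k" if z: "z \<in> ball 0 \<delta>" for z
    proof -
      have "norm (prim \<delta> ?h z - prim \<delta> ?h 0) \<le> (2 * M * (K * (1/2)^k)) * norm (z - 0)"
        apply (rule field_differentiable_bound[of "ball 0 \<delta>" "prim \<delta> ?h" ?h])
        using P(2) hb2 z \<delta> by (auto intro: has_field_derivative_at_within)
      then have "norm (prim \<delta> ?h z) \<le> (2 * M * (K * (1/2)^k)) * norm z" using P(1) by simp
      also have "\<dots> \<le> (2 * M * (K * (1/2)^k)) * (1 / (4 * M))"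
        using z M by (intro mult_left_mono) (auto simp: \<delta>_def K_def)
      also have "\<dots> = K * (1/2)^Suc k" using M by (simp add: field_simps)
      finally show ?thesis .
    qed
    then show ?thesis using P by auto
  qed
  have all: "u k holomorphic_on ball 0 \<delta> \<and> v k holomorphic_on ball 0 \<delta> \<and>
       (\<forall>z\<in>ball 0 \<delta>. norm (u k z) \<le> K * (1/2)^k \<and> norm (v k z) \<le> K * (1/2)^k)" for k
  proof (induction k)
    case 0
    then show ?case by (auto simp: u0 v0 K_def)
  next
    case (Suc k)
    have s1: "u (Suc k) 0 = 0 \<and> (\<forall>z\<in>ball 0 \<delta>. (u (Suc k) has_field_derivative (b11 z * u k z + b12 z * v k z)) (at z)) \<and>
      (\<forall>z\<in>ball 0 \<delta>. norm (u (Suc k) z) \<le> K * (1/2)^Suc k)"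
      unfolding uS by (rule step) (use Suc.IH in auto)
    have s2: "v (Suc k) 0 = 0 \<and> (\<forall>z\<in>ball 0 \<delta>. (v (Suc k) has_field_derivative (b21 z * u k z + b22 z * v k z)) (at z)) \<and>
      (\<forall>z\<in>ball 0 \<delta>. norm (v (Suc k) z) \<le> K * (1/2)^Suc k)"
      unfolding vS by (rule step) (use Suc.IH in auto)
    show ?case using s1 s2 by (auto simp: holomorphic_on_open)
  qed
  have u0z: "u (Suc k) 0 = 0" and v0z: "v (Suc k) 0 = 0" for k
    using step[of k b11 b12] step[of k b21 b22] all[of k] by (auto simp: uS vS)
  define du where "du k z = (case k of 0 \<Rightarrow> 0 | Suc j \<Rightarrow> b11 z * u j z + b12 z * v j z)" for k z
  define dv where "dv k z = (case k of 0 \<Rightarrow> 0 | Suc j \<Rightarrow> b21 z * u j z + b22 z * v j z)" for k z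
  have du: "(u k has_field_derivative du k z) (at z)" if "z \<in> ball 0 \<delta>" for k z
  proof (cases k)
    case 0 then show ?thesis by (simp add: u0 du_def)
  next
    case (Suc j)
    then show ?thesis using step[of j b11 b12] all[of j] that by (auto simp: uS du_def)
  qed
  have dv: "(v k has_field_derivative dv k z) (at z)" if "z \<in> ball 0 \<delta>" for k z
  proof (cases k)
    case 0 then show ?thesis by (simp add: v0 dv_def)
  next
    case (Suc j)
    then show ?thesis using step[of j b21 b22] all[of j] that by (auto simp: vS dv_def)
  qed
  define U where "U z = (\<Sum>k. u k z)" for z
  define V where "V z = (\<Sum>k. v k z)" for z
  have sm: "summable (\<lambda>k. K * (1/2::real)^k)"
    by (intro summable_mult summable_geometric) simp
  have limU: "(\<lambda>n. \<Sum>k<n. u k z) \<longlonglongrightarrow> U z" if "z \<in> ball 0 \<delta>" for z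
  proof -
    have "summable (\<lambda>k. u k z)"
      by (rule summable_comparison_test[OF _ sm]) (use all that in auto)
    then show ?thesis unfolding U_def by (rule summable_LIMSEQ)
  qed
  have limV: "(\<lambda>n. \<Sum>k<n. v k z) \<longlonglongrightarrow> V z" if "z \<in> ball 0 \<delta>" for z
  proof -
    have "summable (\<lambda>k. v k z)"
      by (rule summable_comparison_test[OF _ sm]) (use all that in auto)
    then show ?thesis unfolding V_def by (rule summable_LIMSEQ)
  qed
  have dU: "(U has_field_derivative (b11 z * U z + b12 z * V z)) (at z)" if z: "z \<in> ball 0 \<delta>" for z
  proof -
  have "((\<lambda>z. \<Sum>k. u k z) has_field_derivative (b11 z * U z + b12 z * V z)) (at z)"
  proof (rule series_deriv[where f' = du and K = K and \<delta> = \<delta> and L = "\<lambda>z. b11 z * U z + b12 z * V z"])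
    fix w :: complex assume w: "w \<in> ball 0 \<delta>"
    have "(\<lambda>n. \<Sum>k<Suc n. du k w) = (\<lambda>n. b11 w * (\<Sum>k<n. u k w) + b12 w * (\<Sum>k<n. v k w))"
      by (rule ext, subst sum.lessThan_Suc_shift) (simp add: du_def sum.distrib sum_distrib_left)
    moreover have "(\<lambda>n. b11 w * (\<Sum>k<n. u k w) + b12 w * (\<Sum>k<n. v k w)) \<longlonglongrightarrow> b11 w * U w + b12 w * V w"
      by (intro tendsto_intros limU limV w)
    ultimately show "(\<lambda>n. \<Sum>k<n. du k w) \<longlonglongrightarrow> (\<lambda>z. b11 z * U z + b12 z * V z) w"
      by (simp add: filterlim_sequentially_Suc[symmetric, of "\<lambda>n. \<Sum>k<n. du k w"])
  qed (use du all z in auto)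
  then show ?thesis by (simp add: U_def[abs_def])
  qed
  have dV: "(V has_field_derivative (b21 z * U z + b22 z * V z)) (at z)" if z: "z \<in> ball 0 \<delta>" for z
  proof -
  have "((\<lambda>z. \<Sum>k. v k z) has_field_derivative (b21 z * U z + b22 z * V z)) (at z)"
  proof (rule series_deriv[where f' = dv and K = K and \<delta> = \<delta> and L = "\<lambda>z. b21 z * U z + b22 z * V z"])
    fix w :: complex assume w: "w \<in> ball 0 \<delta>"
    have "(\<lambda>n. \<Sum>k<Suc n. dv k w) = (\<lambda>n. b21 w * (\<Sum>k<n. u k w) + b22 w * (\<Sum>k<n. v k w))"
      by (rule ext, subst sum.lessThan_Suc_shift) (simp add: dv_def sum.distrib sum_distrib_left)
    moreover have "(\<lambda>n. b21 w * (\<Sum>k<n. u k w) + b22 w * (\<Sum>k<n. v k w)) \<longlonglongrightarrow> b21 w * U w + b22 w * V w"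
      by (intro tendsto_intros limU limV w)
    ultimately show "(\<lambda>n. \<Sum>k<n. dv k w) \<longlonglongrightarrow> (\<lambda>z. b21 z * U z + b22 z * V z) w"
      by (simp add: filterlim_sequentially_Suc[symmetric, of "\<lambda>n. \<Sum>k<n. dv k w"])
  qed (use dv all z in auto)
  then show ?thesis by (simp add: V_def[abs_def])
  qed
  have U0: "U 0 = u0"
  proof -
    have "(\<lambda>k. u k 0) = (\<lambda>k. if k = 0 then u0 else 0)"
      by (rule ext) (auto simp: u0 u0z gr0_conv_Suc)
    then have "(\<lambda>k. u k 0) sums u0" using sums_single[of 0 "\<lambda>_. u0"] by simp
    then show ?thesis unfolding U_def by (rule sums_unique[symmetric])
  qed
  have V0: "V 0 = v0"
  proof -
    have "(\<lambda>k. v k 0) = (\<lambda>k. if k = 0 then v0 else 0)"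
      by (rule ext) (auto simp: v0 v0z gr0_conv_Suc)
    then have "(\<lambda>k. v k 0) sums v0" using sums_single[of 0 "\<lambda>_. v0"] by simp
    then show ?thesis unfolding V_def by (rule sums_unique[symmetric])
  qed
  show ?thesis using \<delta> U0 V0 dU dV by blast
qed

lemma sums_laurent:
  fixes c :: "nat \<Rightarrow> complex" and f :: "complex \<Rightarrow> complex" and m :: int
  assumes r: "r > 0"
    and S: "\<And>z. z \<in> ball 0 r - {0} \<Longrightarrow> (\<lambda>n. c n * z powi (int n + m)) sums f z"
  shows "f has_laurent_expansion (fps_to_fls (Abs_fps c) * fls_X_intpow m)"
proof -
  have S': "(\<lambda>n. c n * z ^ n) sums (f z * z powi (-m))" if z: "z \<in> ball 0 r - {0}" for z
  proof -
    have z0: "z \<noteq> 0" using z by auto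
    have "(\<lambda>n. c n * z powi (int n + m) * z powi (-m)) sums (f z * z powi (-m))"
      by (rule sums_mult2[OF S[OF z]])
    moreover have "c n * z powi (int n + m) * z powi (-m) = c n * z ^ n" for n
      using z0 by (simp add: power_int_add power_int_minus field_simps)
    ultimately show ?thesis by simp
  qed
  define F where "F = Abs_fps c"
  have Fn: "fps_nth F = c" by (simp add: F_def Abs_fps_inverse)
  have "of_real (r/2) \<in> ball (0::complex) r - {0}" using r by auto
  from S'[OF this] have "summable (\<lambda>n. c n * (of_real (r/2)) ^ n)" by (rule sums_summable)
  then have "conv_radius c \<ge> norm (of_real (r/2) :: complex)" by (rule conv_radius_geI)
  then have cr: "fps_conv_radius F \<ge> ereal (r/2)" using r by (simp add: fps_conv_radius_def Fn)
  have ev: "eval_fps F z = f z * z powi (-m)" if "z \<in> ball 0 r - {0}" for z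
    using S'[OF that] by (simp add: eval_fps_def Fn sums_iff)
  have g: "(\<lambda>z. f z * z powi (-m)) has_laurent_expansion fps_to_fls F"
    unfolding has_laurent_expansion_def
  proof
    have "ereal 0 < ereal (r/2)" using r by simp
    then have "ereal 0 < fps_conv_radius F" using cr by (rule less_le_trans)
    then show "0 < fls_conv_radius (fps_to_fls F)" by (simp add: zero_ereal_def)
    have "eventually (\<lambda>z. z \<in> ball 0 (r/2) \<and> z \<noteq> 0 \<and> z \<in> UNIV) (at (0::complex))"
      using r by (intro eventually_at_ball') simp
    then show "eventually (\<lambda>z. eval_fls (fps_to_fls F) z = f z * z powi (-m)) (at 0)"
    proof eventually_elim
      case (elim z)
      have "ereal (norm z) < ereal (r/2)" using elim by simp
      then have "ereal (norm z) < fps_conv_radius F" using cr by (rule less_le_trans)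
      then have "eval_fls (fps_to_fls F) z = eval_fps F z" by (rule eval_fps_to_fls)
      also have "\<dots> = f z * z powi (-m)" using elim r by (intro ev) auto
      finally show ?case .
    qed
  qed
  have "(\<lambda>z. f z * z powi (-m) * z powi m) has_laurent_expansion (fps_to_fls F * fls_X_intpow m)"
    by (intro has_laurent_expansion_mult g has_laurent_expansion_fps_X_power_int)
  moreover have "eventually (\<lambda>z. f z * z powi (-m) * z powi m = f z) (at (0::complex))"
  proof -
    have "eventually (\<lambda>z. z \<in> ball 0 1 \<and> z \<noteq> 0 \<and> z \<in> UNIV) (at (0::complex))"
      by (intro eventually_at_ball') simp
    then show ?thesis
      by eventually_elim (simp add: power_int_minus field_simps)
  qed
  ultimately show ?thesis unfolding F_def
    using has_laurent_expansion_cong[of "\<lambda>z. f z * z powi (-m) * z powi m" f] by blast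
qed

lemma laurent_extend:
  assumes "f has_laurent_expansion F" "ordge 0 F"
  shows "\<exists>\<rho>>0. \<exists>g. g holomorphic_on ball 0 \<rho> \<and> (\<forall>z\<in>ball 0 \<rho> - {0}. g z = f z)"
proof -
  define G where "G = fls_regpart F"
  have "0 \<le> fls_subdegree F"
    using assms(2) by (intro fls_subdegree_ge0I) (auto simp: ordge_def)
  then have FG: "F = fps_to_fls G" unfolding G_def by (simp add: fls_regpart_to_fls_trivial)
  have R: "fps_conv_radius G > 0" and ev: "eventually (\<lambda>z. eval_fls F z = f z) (at 0)"
    using assms(1) by (auto simp: has_laurent_expansion_def FG)
  obtain r0 where r0: "0 < ereal r0" "ereal r0 < fps_conv_radius G"
    using ereal_dense2[OF R[unfolded zero_ereal_def]] by auto
  obtain d where d: "d > 0" "\<And>z. z \<noteq> 0 \<Longrightarrow> dist z 0 < d \<Longrightarrow> eval_fls F z = f z"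
    using ev unfolding eventually_at by auto
  define \<rho> where "\<rho> = min d r0"
  have \<rho>: "\<rho> > 0" using d r0 by (simp add: \<rho>_def)
  have sub: "ball (0::complex) \<rho> \<subseteq> eball 0 (fps_conv_radius G)"
  proof
    fix z :: complex assume "z \<in> ball 0 \<rho>"
    then have "ereal (norm z) < ereal r0" by (simp add: \<rho>_def)
    then have "ereal (norm z) < fps_conv_radius G" using r0(2) by (rule less_trans)
    then show "z \<in> eball 0 (fps_conv_radius G)" by simp
  qed
  show ?thesis
  proof (intro exI conjI ballI)
    show "\<rho> > 0" by fact
    show "eval_fps G holomorphic_on ball 0 \<rho>" by (rule holomorphic_on_eval_fps[OF sub])
    fix z :: complex assume z: "z \<in> ball 0 \<rho> - {0}"
    then have "ereal (norm z) < fps_conv_radius G" using sub by auto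
    then have "eval_fps G z = eval_fls F z" by (simp add: FG eval_fps_to_fls)
    also have "\<dots> = f z" using z d by (intro d(2)) (auto simp: \<rho>_def)
    finally show "eval_fps G z = f z" .
  qed
qed

lemma Lnth: "(fps_to_fls (Abs_fps (c :: nat \<Rightarrow> complex)) * fls_X_intpow m) $$ n = (if n - m < 0 then 0 else c (nat (n - m)))"
  by (simp add: fls_X_intpow_times_conv_shift(2))
lemma A_facts:
  fixes A :: "complex \<Rightarrow> complex^2^2" and x0 :: complex and r :: real
    and \<alpha> \<beta> \<gamma> \<mu> :: "nat \<Rightarrow> complex"
  assumes r: "r > 0"
    and a11: "\<And>x. x \<in> ball x0 r - {x0} \<Longrightarrow> (\<lambda>n. \<alpha> n * (x - x0) ^ n) sums (A x $ 1 $ 1)"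
    and a22: "\<And>x. x \<in> ball x0 r - {x0} \<Longrightarrow> (\<lambda>n. \<beta> n * (x - x0) ^ n) sums (A x $ 2 $ 2)"
    and a12: "\<And>x. x \<in> ball x0 r - {x0} \<Longrightarrow>
                (\<lambda>n. \<gamma> n * (x - x0) powi (int n - 2)) sums (A x $ 1 $ 2)"
    and a21: "\<And>x. x \<in> ball x0 r - {x0} \<Longrightarrow>
                (\<lambda>n. \<mu> n * (x - x0) ^ (n + 2)) sums (A x $ 2 $ 1)"
  shows "(\<lambda>z. A (x0 + z) $ 1 $ 1) has_laurent_expansion (fps_to_fls (Abs_fps \<alpha>) * fls_X_intpow 0)"
    and "(\<lambda>z. A (x0 + z) $ 2 $ 2) has_laurent_expansion (fps_to_fls (Abs_fps \<beta>) * fls_X_intpow 0)"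
    and "(\<lambda>z. A (x0 + z) $ 1 $ 2) has_laurent_expansion (fps_to_fls (Abs_fps \<gamma>) * fls_X_intpow (-2))"
    and "(\<lambda>z. A (x0 + z) $ 2 $ 1) has_laurent_expansion (fps_to_fls (Abs_fps \<mu>) * fls_X_intpow 2)"
    and "ordge 1 (fps_to_fls (Abs_fps \<alpha>) * fls_X_intpow 0 - fls_const (\<alpha> 0))"
    and "ordge 1 (fps_to_fls (Abs_fps \<beta>) * fls_X_intpow 0 - fls_const (\<beta> 0))"
    and "ordge 2 (fps_to_fls (Abs_fps \<mu>) * fls_X_intpow 2)"
    and "ordge 0 (fps_to_fls (Abs_fps \<gamma>) * fls_X_intpow (-2) - fls_const (\<gamma> 0) * fls_X_inv^2
                   - fls_const (\<gamma> 1) * fls_X_inv)"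
proof -
  have mem: "x0 + z \<in> ball x0 r - {x0}" if "z \<in> ball 0 r - {0}" for z
    using that by (auto simp: dist_norm)
  show "(\<lambda>z. A (x0 + z) $ 1 $ 1) has_laurent_expansion (fps_to_fls (Abs_fps \<alpha>) * fls_X_intpow 0)"
    by (rule sums_laurent[OF r]) (use a11[OF mem] in \<open>simp add: power_int_of_nat\<close>)
  show "(\<lambda>z. A (x0 + z) $ 2 $ 2) has_laurent_expansion (fps_to_fls (Abs_fps \<beta>) * fls_X_intpow 0)"
    by (rule sums_laurent[OF r]) (use a22[OF mem] in \<open>simp add: power_int_of_nat\<close>)
  show "(\<lambda>z. A (x0 + z) $ 1 $ 2) has_laurent_expansion (fps_to_fls (Abs_fps \<gamma>) * fls_X_intpow (-2))"
    by (rule sums_laurent[OF r]) (use a12[OF mem] in simp)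
  show "(\<lambda>z. A (x0 + z) $ 2 $ 1) has_laurent_expansion (fps_to_fls (Abs_fps \<mu>) * fls_X_intpow 2)"
  proof (rule sums_laurent[OF r])
    fix z :: complex assume z: "z \<in> ball 0 r - {0}"
    have "z powi (int n + 2) = z ^ (n + 2)" for n
      by (metis of_nat_add of_nat_numeral power_int_of_nat)
    then show "(\<lambda>n. \<mu> n * z powi (int n + 2)) sums A (x0 + z) $ 2 $ 1"
      using a21[OF mem[OF z]] by simp
  qed
  show "ordge 1 (fps_to_fls (Abs_fps \<alpha>) * fls_X_intpow 0 - fls_const (\<alpha> 0))"
    by (auto simp: ordge_def Lnth)
  show "ordge 1 (fps_to_fls (Abs_fps \<beta>) * fls_X_intpow 0 - fls_const (\<beta> 0))"
    by (auto simp: ordge_def Lnth)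
  show "ordge 2 (fps_to_fls (Abs_fps \<mu>) * fls_X_intpow 2)"
    by (auto simp: ordge_def Lnth)
  show "ordge 0 (fps_to_fls (Abs_fps \<gamma>) * fls_X_intpow (-2) - fls_const (\<gamma> 0) * fls_X_inv^2
                   - fls_const (\<gamma> 1) * fls_X_inv)"
  proof (unfold ordge_def, intro allI impI)
    fix n :: int assume n: "n < 0"
    have "n = -1 \<or> n = -2 \<or> n < -2" using n by linarith
    then show "(fps_to_fls (Abs_fps \<gamma>) * fls_X_intpow (-2) - fls_const (\<gamma> 0) * fls_X_inv^2
                   - fls_const (\<gamma> 1) * fls_X_inv) $$ n = 0"
      unfolding fls_minus_nth Lnth by auto
  qed
qed

lemma matmul2: "((M::complex^2^2) ** N) $ i $ j = M $ i $ 1 * N $ 1 $ j + M $ i $ 2 * N $ 2 $ j"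
  by (simp add: matrix_matrix_mult_def sum_2)

lemma necessity:
  fixes A :: "complex \<Rightarrow> complex^2^2" and x0 :: complex and r :: real
    and \<alpha> \<beta> \<gamma> \<mu> :: "nat \<Rightarrow> complex"
  assumes r: "r > 0"
    and a11: "\<And>x. x \<in> ball x0 r - {x0} \<Longrightarrow> (\<lambda>n. \<alpha> n * (x - x0) ^ n) sums (A x $ 1 $ 1)"
    and a22: "\<And>x. x \<in> ball x0 r - {x0} \<Longrightarrow> (\<lambda>n. \<beta> n * (x - x0) ^ n) sums (A x $ 2 $ 2)"
    and a12: "\<And>x. x \<in> ball x0 r - {x0} \<Longrightarrow>
                (\<lambda>n. \<gamma> n * (x - x0) powi (int n - 2)) sums (A x $ 1 $ 2)"
    and a21: "\<And>x. x \<in> ball x0 r - {x0} \<Longrightarrow>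
                (\<lambda>n. \<mu> n * (x - x0) ^ (n + 2)) sums (A x $ 2 $ 1)"
    and srp: "strong_regular_point A x0"
  shows "\<gamma> 0 * (\<alpha> 0 - \<beta> 0) = \<gamma> 1"
proof (rule ccontr)
  assume cond: "\<gamma> 0 * (\<alpha> 0 - \<beta> 0) \<noteq> \<gamma> 1"
  note AF = A_facts[OF r a11 a22 a12 a21]
  define LA where "LA i k = (if i = (1::2) then (if k = (1::2) then fps_to_fls (Abs_fps \<alpha>) * fls_X_intpow 0
       else fps_to_fls (Abs_fps \<gamma>) * fls_X_intpow (-2)) else (if k = 1 then fps_to_fls (Abs_fps \<mu>) * fls_X_intpow 2
       else fps_to_fls (Abs_fps \<beta>) * fls_X_intpow 0))" for i k
  have LA: "(\<lambda>z. A (x0 + z) $ i $ k) has_laurent_expansion LA i k" for i k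
    using AF(1-4) exhaust_2[of i] exhaust_2[of k] by (auto simp: LA_def)
  from srp obtain r1 and W :: "complex \<Rightarrow> complex^2^2" and m :: int where r1: "r1 > 0"
    and sol: "solves_on A W (ball x0 r1 - {x0})"
    and det: "\<forall>x\<in>ball x0 r1 - {x0}. det (W x) \<noteq> 0"
    and ser: "\<forall>i j. \<exists>b :: nat \<Rightarrow> complex. \<forall>x\<in>ball x0 r1 - {x0}.
           (\<lambda>n. b n * (x - x0) powi (int n + m)) sums (W x $ i $ j)"
    unfolding strong_regular_point_def by blast
  from ser obtain bb :: "2 \<Rightarrow> 2 \<Rightarrow> nat \<Rightarrow> complex" where bb: "\<And>i j x. x \<in> ball x0 r1 - {x0} \<Longrightarrow>
           (\<lambda>n. bb i j n * (x - x0) powi (int n + m)) sums (W x $ i $ j)"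
    by metis
  have mem: "x0 + z \<in> ball x0 r1 - {x0}" if "z \<in> ball 0 r1 - {0}" for z
    using that by (auto simp: dist_norm)
  define FW where "FW i j = fps_to_fls (Abs_fps (bb i j)) * fls_X_intpow m" for i j
  have FW: "(\<lambda>z. W (x0 + z) $ i $ j) has_laurent_expansion FW i j" for i j
    unfolding FW_def by (rule sums_laurent[OF r1]) (use bb[OF mem] in simp)
  have eqs: "fls_deriv (FW i j) = LA i 1 * FW 1 j + LA i 2 * FW 2 j" for i j
  proof -
    have d: "((\<lambda>z. W (x0 + z) $ i $ j) has_field_derivative (A (x0 + z) ** W (x0 + z)) $ i $ j) (at z)"
      if z: "z \<in> ball 0 r1 - {0}" for z
    proof -
      have "((\<lambda>y. W y $ i $ j) has_field_derivative (A (x0 + z) ** W (x0 + z)) $ i $ j) (at (z + x0))"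
        using sol mem[OF z] unfolding solves_on_def by (simp add: add.commute)
      then show ?thesis by (subst (asm) DERIV_shift) (simp add: add.commute)
    qed
    have e1: "(\<lambda>z. (A (x0 + z) ** W (x0 + z)) $ i $ j) has_laurent_expansion fls_deriv (FW i j)"
      by (rule has_laurent_expansion_deriv'[OF FW, of "ball 0 r1"]) (use d r1 in auto)
    have e2: "(\<lambda>z. A (x0 + z) $ i $ 1 * W (x0 + z) $ 1 $ j + A (x0 + z) $ i $ 2 * W (x0 + z) $ 2 $ j)
               has_laurent_expansion (LA i 1 * FW 1 j + LA i 2 * FW 2 j)"
      by (intro has_laurent_expansion_add has_laurent_expansion_mult LA FW)
    show ?thesis using e1 e2 by (auto simp: matmul2 intro: has_laurent_expansion_unique)
  qed
  define L11 where "L11 = fps_to_fls (Abs_fps \<alpha>) * fls_X_intpow 0"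
  define L12 where "L12 = fps_to_fls (Abs_fps \<gamma>) * fls_X_intpow (-2)"
  define L21 where "L21 = fps_to_fls (Abs_fps \<mu>) * fls_X_intpow 2"
  define L22 where "L22 = fps_to_fls (Abs_fps \<beta>) * fls_X_intpow 0"
  have LA': "LA 1 1 = L11" "LA 1 2 = L12" "LA 2 1 = L21" "LA 2 2 = L22"
    by (simp_all add: LA_def L11_def L12_def L21_def L22_def)
  have D0: "FW 1 1 * FW 2 2 - FW 1 2 * FW 2 1 = 0"
    by (rule fls_main[OF AF(5)[folded L11_def] AF(6)[folded L22_def] AF(7)[folded L21_def]
          AF(8)[folded L12_def] _ _ _ _ cond])
       (use eqs[of 1 1] eqs[of 2 1] eqs[of 1 2] eqs[of 2 2] in \<open>simp_all only: LA'\<close>)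
  have "(\<lambda>z. W (x0 + z) $ 1 $ 1 * W (x0 + z) $ 2 $ 2 - W (x0 + z) $ 1 $ 2 * W (x0 + z) $ 2 $ 1)
          has_laurent_expansion (FW 1 1 * FW 2 2 - FW 1 2 * FW 2 1)"
    by (intro has_laurent_expansion_diff has_laurent_expansion_mult FW)
  then have "(\<lambda>z. det (W (x0 + z))) has_laurent_expansion 0"
    using D0 by (simp add: det_2)
  then have ev0: "eventually (\<lambda>z. det (W (x0 + z)) = 0) (at 0)"
    by (auto simp: has_laurent_expansion_def)
  have ev1: "eventually (\<lambda>z. z \<in> ball 0 r1 \<and> z \<noteq> 0 \<and> z \<in> UNIV) (at (0::complex))"
    using r1 by (intro eventually_at_ball') simp
  have "eventually (\<lambda>z. False) (at (0::complex))"
    using ev0 ev1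
  proof eventually_elim
    case (elim z)
    then show False using det mem[of z] by auto
  qed
  then show False by simp
qed

lemma shift_deriv:
  "(p has_field_derivative D) (at (x - x0)) \<Longrightarrow> ((\<lambda>y. p (y - x0)) has_field_derivative D) (at (x::complex))"
  using DERIV_shift[of p D x "-x0"] by simp

lemma LS:
  fixes a b :: "nat \<Rightarrow> complex"
  assumes "(\<lambda>n. a n * z^n) sums A0" "(\<lambda>n. b n * z^n) sums B0" "z \<noteq> 0"
  shows "(\<lambda>n. ((if n = 0 then 0 else a (n-1)) + d * b n) * z powi (int n + -1)) sums (A0 + d * inverse z * B0)"
proof -
  define f where "f n = (if n = 0 then 0 else a (n-1)) * z powi (int n + -1)" for n
  have "(\<lambda>n. f (Suc n)) = (\<lambda>n. a n * z^n)"
    by (rule ext) (simp add: f_def power_int_of_nat)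
  then have "(\<lambda>n. f (Suc n)) sums A0" using assms(1) by simp
  then have 1: "f sums A0" by (subst (asm) sums_Suc_iff) (simp add: f_def)
  have 2: "(\<lambda>n. d * inverse z * (b n * z^n)) sums (d * inverse z * B0)"
    by (rule sums_mult[OF assms(2)])
  have "(\<lambda>n. f n + d * inverse z * (b n * z^n)) sums (A0 + d * inverse z * B0)"
    by (rule sums_add[OF 1 2])
  moreover have "f n + d * inverse z * (b n * z^n) = ((if n = 0 then 0 else a (n-1)) + d * b n) * z powi (int n + -1)" for n
  proof -
    have "z powi (int n + -1) = z ^ n * inverse z"
      using assms(3) power_int_add[of z "int n" "-1"] by (simp add: power_int_of_nat power_int_minus)
    then show ?thesis by (simp add: f_def algebra_simps)
  qed
  ultimately show ?thesis by simp
qed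

lemma sufficiency:
  fixes A :: "complex \<Rightarrow> complex^2^2" and x0 :: complex and r :: real
    and \<alpha> \<beta> \<gamma> \<mu> :: "nat \<Rightarrow> complex"
  assumes r: "r > 0"
    and a11: "\<And>x. x \<in> ball x0 r - {x0} \<Longrightarrow> (\<lambda>n. \<alpha> n * (x - x0) ^ n) sums (A x $ 1 $ 1)"
    and a22: "\<And>x. x \<in> ball x0 r - {x0} \<Longrightarrow> (\<lambda>n. \<beta> n * (x - x0) ^ n) sums (A x $ 2 $ 2)"
    and a12: "\<And>x. x \<in> ball x0 r - {x0} \<Longrightarrow>
                (\<lambda>n. \<gamma> n * (x - x0) powi (int n - 2)) sums (A x $ 1 $ 2)"
    and a21: "\<And>x. x \<in> ball x0 r - {x0} \<Longrightarrow>
                (\<lambda>n. \<mu> n * (x - x0) ^ (n + 2)) sums (A x $ 2 $ 1)"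
    and cond: "\<gamma> 0 * (\<alpha> 0 - \<beta> 0) = \<gamma> 1"
  shows "strong_regular_point A x0"
proof -
  note AF = A_facts[OF r a11 a22 a12 a21]
  define c where "c = \<gamma> 0"
  define L11 where "L11 = fps_to_fls (Abs_fps \<alpha>) * fls_X_intpow 0"
  define L12 where "L12 = fps_to_fls (Abs_fps \<gamma>) * fls_X_intpow (-2)"
  define L21 where "L21 = fps_to_fls (Abs_fps \<mu>) * fls_X_intpow 2"
  define L22 where "L22 = fps_to_fls (Abs_fps \<beta>) * fls_X_intpow 0"
  note B = B_ordge[OF AF(5)[folded L11_def] AF(6)[folded L22_def] AF(7)[folded L21_def]
          AF(8)[folded L12_def, folded c_def]]
  define f11 where "f11 z = A (x0 + z) $ 1 $ 1 + c * inverse z * A (x0 + z) $ 2 $ 1" for z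
  define f12 where "f12 z = A (x0 + z) $ 1 $ 2 - c * inverse z ^ 2
      - c * inverse z * (A (x0 + z) $ 1 $ 1 - A (x0 + z) $ 2 $ 2)
      - c * c * inverse z ^ 2 * A (x0 + z) $ 2 $ 1" for z
  define f21 where "f21 z = A (x0 + z) $ 2 $ 1" for z
  define f22 where "f22 z = A (x0 + z) $ 2 $ 2 - c * inverse z * A (x0 + z) $ 2 $ 1" for z
  have E11: "f11 has_laurent_expansion (L11 + fls_const c * fls_X_inv * L21)"
    unfolding f11_def[abs_def] L11_def L21_def
    by (intro laurent_expansion_intros AF(1-4))
  have E12: "f12 has_laurent_expansion (L12 - fls_const c * fls_X_inv^2 - fls_const c * fls_X_inv * (L11 - L22)
             - fls_const c * fls_const c * fls_X_inv^2 * L21)"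
    unfolding f12_def[abs_def] L11_def L21_def L12_def L22_def
    by (intro laurent_expansion_intros AF(1-4))
  have E21: "f21 has_laurent_expansion L21"
    unfolding f21_def[abs_def] L21_def by (intro AF(1-4))
  have E22: "f22 has_laurent_expansion (L22 - fls_const c * fls_X_inv * L21)"
    unfolding f22_def[abs_def] L22_def L21_def
    by (intro laurent_expansion_intros AF(1-4))
  have o12: "ordge 0 (L12 - fls_const c * fls_X_inv^2 - fls_const c * fls_X_inv * (L11 - L22)
             - fls_const c * fls_const c * fls_X_inv^2 * L21)"
    using B(4) cond by (simp add: c_def)
  obtain \<rho>11 g11 where g11: "\<rho>11 > 0" "g11 holomorphic_on ball 0 \<rho>11" "\<And>z. z \<in> ball 0 \<rho>11 - {0} \<Longrightarrow> g11 z = f11 z"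
    using laurent_extend[OF E11 B(1)] by blast
  obtain \<rho>12 g12 where g12: "\<rho>12 > 0" "g12 holomorphic_on ball 0 \<rho>12" "\<And>z. z \<in> ball 0 \<rho>12 - {0} \<Longrightarrow> g12 z = f12 z"
    using laurent_extend[OF E12 o12] by blast
  obtain \<rho>21 g21 where g21: "\<rho>21 > 0" "g21 holomorphic_on ball 0 \<rho>21" "\<And>z. z \<in> ball 0 \<rho>21 - {0} \<Longrightarrow> g21 z = f21 z"
    using laurent_extend[OF E21 B(3)] by blast
  obtain \<rho>22 g22 where g22: "\<rho>22 > 0" "g22 holomorphic_on ball 0 \<rho>22" "\<And>z. z \<in> ball 0 \<rho>22 - {0} \<Longrightarrow> g22 z = f22 z"
    using laurent_extend[OF E22 B(2)] by blast
  define \<rho> where "\<rho> = min (min \<rho>11 \<rho>12) (min \<rho>21 \<rho>22)"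
  have \<rho>: "\<rho> > 0" using g11 g12 g21 g22 by (simp add: \<rho>_def)
  have hol: "g11 holomorphic_on ball 0 \<rho>" "g12 holomorphic_on ball 0 \<rho>"
            "g21 holomorphic_on ball 0 \<rho>" "g22 holomorphic_on ball 0 \<rho>"
    using g11(2) g12(2) g21(2) g22(2)
    by (auto elim!: holomorphic_on_subset simp: \<rho>_def)
  have geq: "g11 z = f11 z" "g12 z = f12 z" "g21 z = f21 z" "g22 z = f22 z" if "z \<in> ball 0 \<rho> - {0}" for z
    using that g11(3) g12(3) g21(3) g22(3) by (auto simp: \<rho>_def)
  obtain \<delta>1 p1 q1 where s1: "\<delta>1 > 0" "p1 0 = 1" "q1 0 = 0"
    "\<And>z. z \<in> ball 0 \<delta>1 \<Longrightarrow> (p1 has_field_derivative (g11 z * p1 z + g12 z * q1 z)) (at z)"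
    "\<And>z. z \<in> ball 0 \<delta>1 \<Longrightarrow> (q1 has_field_derivative (g21 z * p1 z + g22 z * q1 z)) (at z)"
    using ode_local[OF \<rho> hol, of 1 0] by blast
  obtain \<delta>2 p2 q2 where s2: "\<delta>2 > 0" "p2 0 = 0" "q2 0 = 1"
    "\<And>z. z \<in> ball 0 \<delta>2 \<Longrightarrow> (p2 has_field_derivative (g11 z * p2 z + g12 z * q2 z)) (at z)"
    "\<And>z. z \<in> ball 0 \<delta>2 \<Longrightarrow> (q2 has_field_derivative (g21 z * p2 z + g22 z * q2 z)) (at z)"
    using ode_local[OF \<rho> hol, of 0 1] by blast
  define P where "P j = (if j = (1::2) then p1 else p2)" for j
  define Q where "Q j = (if j = (1::2) then q1 else q2)" for j
  define \<delta> where "\<delta> = min \<delta>1 \<delta>2"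
  have \<delta>: "\<delta> > 0" using s1 s2 by (simp add: \<delta>_def)
  have dP: "(P j has_field_derivative (g11 z * P j z + g12 z * Q j z)) (at z)"
    and dQ: "(Q j has_field_derivative (g21 z * P j z + g22 z * Q j z)) (at z)"
    if "z \<in> ball 0 \<delta>" for j z
    using that s1 s2 by (auto simp: P_def Q_def \<delta>_def)
  have "isCont (\<lambda>z. p1 z * q2 z - p2 z * q1 z) 0"
    using s1(4)[of 0] s1(5)[of 0] s2(4)[of 0] s2(5)[of 0] s1(1) s2(1)
    by (intro continuous_intros DERIV_isCont) auto
  then have "((\<lambda>z. p1 z * q2 z - p2 z * q1 z) \<longlongrightarrow> 1) (at 0)"
    using s1 s2 by (simp add: isCont_def)
  then have "eventually (\<lambda>z. p1 z * q2 z - p2 z * q1 z \<noteq> 0) (at 0)"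
    by (rule tendsto_imp_eventually_ne) simp
  then obtain \<epsilon> where \<epsilon>: "\<epsilon> > 0" "\<And>z. z \<noteq> 0 \<Longrightarrow> dist z 0 < \<epsilon> \<Longrightarrow> p1 z * q2 z - p2 z * q1 z \<noteq> 0"
    unfolding eventually_at by auto
  define R where "R = min (min \<rho> \<delta>) \<epsilon>"
  have R: "R > 0" using \<rho> \<delta> \<epsilon> by (simp add: R_def)
  define W :: "complex \<Rightarrow> complex^2^2" where
    "W x = (\<chi> i j. if i = 1 then P j (x - x0) - c * inverse (x - x0) * Q j (x - x0) else Q j (x - x0))" for x
  have zin: "x - x0 \<in> ball 0 \<rho> - {0}" "x - x0 \<in> ball 0 \<delta>" "x - x0 \<noteq> 0" "dist (x - x0) 0 < \<epsilon>"
    if "x \<in> ball x0 R - {x0}" for x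
    using that by (auto simp: R_def dist_norm norm_minus_commute)
  show ?thesis
    unfolding strong_regular_point_def
  proof (intro exI conjI)
    show "R > 0" by fact
    show "solves_on A W (ball x0 R - {x0})"
      unfolding solves_on_def
    proof (intro ballI allI)
      fix x i j assume x: "x \<in> ball x0 R - {x0}"
      define z where "z = x - x0"
      have z: "z \<in> ball 0 \<rho> - {0}" "z \<in> ball 0 \<delta>" "z \<noteq> 0" using zin[OF x] by (auto simp: z_def)
      have xz: "x0 + z = x" by (simp add: z_def)
      have dP': "((\<lambda>y. P j (y - x0)) has_field_derivative (f11 z * P j z + f12 z * Q j z)) (at x)"
        using shift_deriv[of "P j" _ x x0] dP[OF z(2)] geq[OF z(1)] by (simp add: z_def)
      have dQ': "((\<lambda>y. Q j (y - x0)) has_field_derivative (f21 z * P j z + f22 z * Q j z)) (at x)"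
        using shift_deriv[of "Q j" _ x x0] dQ[OF z(2)] geq[OF z(1)] by (simp add: z_def)
      have W1: "W x $ 1 $ k = P k z - c * inverse z * Q k z" for k by (simp add: W_def z_def)
      have W2: "W x $ 2 $ k = Q k z" for k by (simp add: W_def z_def)
      have Ax: "A x = A (x0 + z)" by (simp add: xz)
      show "((\<lambda>y. W y $ i $ j) has_field_derivative (A x ** W x) $ i $ j) (at x)"
      proof (cases "i = 1")
        case True
        have fe: "(\<lambda>y. W y $ i $ j) = (\<lambda>y. P j (y - x0) - c * inverse (y - x0) * Q j (y - x0))"
          using True by (simp add: W_def)
        have dI: "((\<lambda>y. inverse (y - x0)) has_field_derivative (- (inverse z * inverse z))) (at x)"
          using z(3) by (auto intro!: derivative_eq_intros simp: z_def power2_eq_square)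
        have d: "((\<lambda>y. P j (y - x0) - c * inverse (y - x0) * Q j (y - x0)) has_field_derivative
               ((f11 z * P j z + f12 z * Q j z) - (c * ((- (inverse z * inverse z)) * Q j z
                 + inverse z * (f21 z * P j z + f22 z * Q j z))))) (at x)"
          using DERIV_diff[OF dP' DERIV_cmult[OF DERIV_mult[OF dI dQ']], of c]
          by (simp add: z_def[symmetric] algebra_simps)
        have val: "((f11 z * P j z + f12 z * Q j z) - (c * ((- (inverse z * inverse z)) * Q j z
                 + inverse z * (f21 z * P j z + f22 z * Q j z)))) = (A x ** W x) $ i $ j"
          unfolding True matmul2 W1 W2 Ax f11_def f12_def f21_def f22_def
          by (simp add: power2_eq_square algebra_simps)
        show ?thesis unfolding fe using DERIV_cong[OF d val] .
      next
        case False
        then have i2: "i = 2" using exhaust_2[of i] by blast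
        have fe: "(\<lambda>y. W y $ i $ j) = (\<lambda>y. Q j (y - x0))"
          using i2 by (simp add: W_def)
        have val: "f21 z * P j z + f22 z * Q j z = (A x ** W x) $ i $ j"
          unfolding i2 matmul2 W1 W2 Ax f21_def f22_def
          by (simp add: algebra_simps)
        show ?thesis unfolding fe using DERIV_cong[OF dQ' val] .
      qed
    qed
    show "\<forall>x\<in>ball x0 R - {x0}. det (W x) \<noteq> 0"
    proof
      fix x assume x: "x \<in> ball x0 R - {x0}"
      have "det (W x) = p1 (x - x0) * q2 (x - x0) - p2 (x - x0) * q1 (x - x0)"
        by (simp add: det_2 W_def P_def Q_def algebra_simps)
      then show "det (W x) \<noteq> 0" using \<epsilon>(2) zin[OF x] by simp
    qed
    show "\<forall>i j. \<exists>b. \<forall>x\<in>ball x0 R - {x0}. (\<lambda>n. b n * (x - x0) powi (int n + - 1)) sums (W x $ i $ j)"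
    proof (intro allI)
      fix i j :: 2
      have holP: "P j holomorphic_on ball 0 \<delta>" and holQ: "Q j holomorphic_on ball 0 \<delta>"
        using dP[of _ j] dQ[of _ j] by (auto simp: holomorphic_on_open intro!: exI)
      define sP where "sP n = (deriv ^^ n) (P j) 0 / fact n" for n
      define sQ where "sQ n = (deriv ^^ n) (Q j) 0 / fact n" for n
      have serP: "(\<lambda>n. sP n * z ^ n) sums P j z" and serQ: "(\<lambda>n. sQ n * z ^ n) sums Q j z"
        if "z \<in> ball 0 \<delta>" for z
        using holomorphic_power_series[OF holP that] holomorphic_power_series[OF holQ that]
        by (simp_all add: sP_def sQ_def)
      show "\<exists>b. \<forall>x\<in>ball x0 R - {x0}. (\<lambda>n. b n * (x - x0) powi (int n + - 1)) sums (W x $ i $ j)"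
      proof (cases "i = 1")
        case True
        show ?thesis
        proof (intro exI ballI)
          fix x assume x: "x \<in> ball x0 R - {x0}"
          have "(\<lambda>n. ((if n = 0 then 0 else sP (n-1)) + (-c) * sQ n) * (x - x0) powi (int n + -1)) sums
                 (P j (x - x0) + (-c) * inverse (x - x0) * Q j (x - x0))"
            using LS[OF serP[OF zin(2)[OF x]] serQ[OF zin(2)[OF x]] zin(3)[OF x]] .
          then show "(\<lambda>n. ((if n = 0 then 0 else sP (n-1)) + (-c) * sQ n) * (x - x0) powi (int n + -1))
                 sums (W x $ i $ j)"
            using True by (simp add: W_def)
        qed
      next
        case False
        then have i2: "i = 2" using exhaust_2[of i] by blast
        show ?thesis
        proof (intro exI ballI)
          fix x assume x: "x \<in> ball x0 R - {x0}"
          have s0: "(\<lambda>n. 0 * (x - x0) ^ n) sums (0::complex)" by simp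
          have "(\<lambda>n. ((if n = 0 then 0 else sQ (n-1)) + 0 * 0) * (x - x0) powi (int n + -1)) sums
                 (Q j (x - x0) + 0 * inverse (x - x0) * 0)"
            using LS[OF serQ[OF zin(2)[OF x]] s0 zin(3)[OF x], of 0] by simp
          then show "(\<lambda>n. ((if n = 0 then 0 else sQ (n-1)) + 0 * 0) * (x - x0) powi (int n + -1))
                 sums (W x $ i $ j)"
            using i2 by (simp add: W_def)
        qed
      qed
    qed
  qed
qed

theorem proposition4p2:
  fixes A :: "complex \<Rightarrow> complex^2^2" and x0 :: complex and r :: real
    and \<alpha> \<beta> \<gamma> \<mu> :: "nat \<Rightarrow> complex"
  assumes r: "r > 0"
    and hol: "\<And>i j. (\<lambda>x. A x $ i $ j) holomorphic_on (ball x0 r - {x0})"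
    and a11: "\<And>x. x \<in> ball x0 r - {x0} \<Longrightarrow> (\<lambda>n. \<alpha> n * (x - x0) ^ n) sums (A x $ 1 $ 1)"
    and a22: "\<And>x. x \<in> ball x0 r - {x0} \<Longrightarrow> (\<lambda>n. \<beta> n * (x - x0) ^ n) sums (A x $ 2 $ 2)"
    and a12: "\<And>x. x \<in> ball x0 r - {x0} \<Longrightarrow>
                (\<lambda>n. \<gamma> n * (x - x0) powi (int n - 2)) sums (A x $ 1 $ 2)"
    and a21: "\<And>x. x \<in> ball x0 r - {x0} \<Longrightarrow>
                (\<lambda>n. \<mu> n * (x - x0) ^ (n + 2)) sums (A x $ 2 $ 1)"
  shows "strong_regular_point A x0 \<longleftrightarrow> \<gamma> 0 * (\<alpha> 0 - \<beta> 0) = \<gamma> 1"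
  using necessity[OF r a11 a22 a12 a21] sufficiency[OF r a11 a22 a12 a21] by blast

end
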